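(* Let $\mathcal I=(I_1,\dots,I_p)$ be an ideal marking of the unit disk $\mathbb D$. For any two distinct unordered pairs $\{m,n\}\neq\{m',n'\}$ of non-adjacent indices with $\overline{\mathcal W}_{mn}>2$ and $\overline{\mathcal W}_{m'n'}>2$, the truncated quadrilaterals $\Pi_{mn}$ and $\Pi_{m'n'}$ are disjoint. Consequently the vertical foliations $\mathcal F_{mn}$ of all the $\Pi_{mn}$ together form a lamination $\mathcal F(\mathbb D,\mathcal I)$ of $\mathbb D$ supported on $\bigsqcup\Pi_{mn}$.
   Context: An ideal marking of $\mathbb D$ of cardinality $p$ is a tiling of the unit circle $\mathbb T=\partial\mathbb D$ into closed arcs $I_1,\dots,I_p$ listed in cyclic order, indices taken in $\mathbb Z/p\mathbb Z$; indices $m,n$ are adjacent if $|m-n|\le1$ in $\mathbb Z/p\mathbb Z$. For non-adjacent $m,n$, $\overline\Pi_{mn}$ denotes $\mathbb D$ regarded as a conformal quadrilateral with horizontal sides $I_m$ and $I_n$, and $\overline{\mathcal W}_{mn}$ is its width, i.e. the extremal width of the family of paths in $\mathbb D$ joining $I_m$ to $I_n$. When $\overline{\mathcal W}_{mn}>2$, let $\phi:\overline\Pi_{mn}\to(0,\overline{\mathcal W}_{mn})\times(0,1)$ be the conformal map sending $I_m$ to the bottom side and $I_n$ to the top side; the truncated quadrilateral is $\Pi_{mn}=\phi^{-1}\big((1,\overline{\mathcal W}_{mn}-1)\times(0,1)\big)$ (the two end squares are removed), and $\mathcal F_{mn}$ is the pullback under $\phi$ of the foliation by vertical segments. Its width is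 $\mathcal W_{mn}=\overline{\mathcal W}_{mn}-2$; set $\mathcal W_{mn}=0$ if $\overline{\mathcal W}_{mn}\le2$. *)

theory Defs
  imports "HOL-Complex_Analysis.Complex_Analysis"
begin

definition ideal_marking :: "nat \<Rightarrow> (nat \<Rightarrow> real) \<Rightarrow> bool" where
  "ideal_marking p \<theta> \<longleftrightarrow> 1 \<le> p \<and> (\<forall>k. Suc k < p \<longrightarrow> \<theta> k < \<theta> (Suc k))
      \<and> \<theta> (p - 1) < \<theta> 0 + 2 * pi"

definition next_angle :: "nat \<Rightarrow> (nat \<Rightarrow> real) \<Rightarrow> nat \<Rightarrow> real" where
  "next_angle p \<theta> k = (if Suc (k mod p) < p then \<theta> (Suc (k mod p)) else \<theta> 0 + 2 * pi)"

definition marking_arc :: "nat \<Rightarrow> (nat \<Rightarrow> real) \<Rightarrow> nat \<Rightarrow> complex set" where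
  "marking_arc p \<theta> k = (\<lambda>t. cis t) ` {\<theta> (k mod p) .. next_angle p \<theta> k}"

definition adjacent_idx :: "nat \<Rightarrow> nat \<Rightarrow> nat \<Rightarrow> bool" where
  "adjacent_idx p m n \<longleftrightarrow> (int m - int n) mod int p \<in> {0, 1, int p - 1}"

text \<open>The number W is then the width of the quadrilateral.\<close>
definition quad_map ::
  "nat \<Rightarrow> (nat \<Rightarrow> real) \<Rightarrow> nat \<Rightarrow> nat \<Rightarrow> (complex \<Rightarrow> complex) \<Rightarrow> real \<Rightarrow> bool" where
  "quad_map p \<theta> m n \<phi> W \<longleftrightarrow> 0 < W
     \<and> \<phi> holomorphic_on ball 0 1 \<and> inj_on \<phi> (ball 0 1)
     \<and> \<phi> ` ball 0 1 = {z. 0 < Re z \<and> Re z < W \<and> 0 < Im z \<and> Im z < 1}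
     \<and> continuous_on (cball 0 1) \<phi>
     \<and> \<phi> ` marking_arc p \<theta> m = {z. 0 \<le> Re z \<and> Re z \<le> W \<and> Im z = 0}
     \<and> \<phi> ` marking_arc p \<theta> n = {z. 0 \<le> Re z \<and> Re z \<le> W \<and> Im z = 1}"

definition truncated_quad :: "(complex \<Rightarrow> complex) \<Rightarrow> real \<Rightarrow> complex set" where
  "truncated_quad \<phi> W = {z \<in> ball 0 1. 1 < Re (\<phi> z) \<and> Re (\<phi> z) < W - 1}"

definition vertical_leaf :: "(complex \<Rightarrow> complex) \<Rightarrow> real \<Rightarrow> complex set" where
  "vertical_leaf \<phi> x = {z \<in> ball 0 1. Re (\<phi> z) = x}"

end

theory Submission
  imports Defs
begin



lemma UNIV_2': "(UNIV :: 2 set) = {1, 2}"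
  using exhaust_2 by auto

lemma Basis_real2: "(Basis::(real^2) set) = {axis 1 1, axis 2 1}"
  unfolding Basis_vec_def by (auto simp: UNIV_2')

lemma prod_cart_basis2: "(\<Prod>b\<in>(Basis::(real^2) set). f b) = f (axis 1 1) * f (axis 2 1)"
proof -
  have "axis (1::2) (1::real) \<noteq> axis 2 1" by (simp add: axis_eq_axis)
  then show ?thesis unfolding Basis_real2 by (simp add: prod.insert)
qed

lemma lborel_real2_pair:
  "distr (lborel :: (real^2) measure) borel (\<lambda>v. (v$1, v$2)) = (lborel :: (real \<times> real) measure)"
proof (rule lborel_eqI[symmetric])
  fix l u :: "real \<times> real"
  assume le: "\<And>b. b \<in> Basis \<Longrightarrow> l \<bullet> b \<le> u \<bullet> b"
  have le1: "fst l \<le> fst u" using le[of "(1,0)"] by (cases l; cases u) (simp add: Basis_prod_def)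
  have le2: "snd l \<le> snd u" using le[of "(0,1)"] by (cases l; cases u) (simp add: Basis_prod_def)
  define L :: "real^2" where "L = (\<chi> i. if i = 1 then fst l else snd l)"
  define U :: "real^2" where "U = (\<chi> i. if i = 1 then fst u else snd u)"
  have meas: "(\<lambda>v::real^2. (v$1, v$2)) \<in> borel \<rightarrow>\<^sub>M borel"
    by (intro borel_measurable_continuous_onI continuous_intros)
  have pre: "(\<lambda>v::real^2. (v$1, v$2)) -` box l u = box L U"
  proof -
    have "v \<in> box l u \<longleftrightarrow> fst l < fst v \<and> fst v < fst u \<and> snd l < snd v \<and> snd v < snd u" for v :: "real \<times> real"
      by (cases l; cases u; cases v) (auto simp: box_def Basis_prod_def)
    moreover have "w \<in> box L U \<longleftrightarrow> fst l < w$1 \<and> w$1 < fst u \<and> snd l < w$2 \<and> w$2 < snd u" for w :: "real^2"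
      by (simp add: box_def Basis_real2 inner_axis L_def U_def)
    ultimately show ?thesis by auto
  qed
  have "emeasure (distr lborel borel (\<lambda>v::real^2. (v$1, v$2))) (box l u) = emeasure lborel (box L U)"
    using meas by (simp add: emeasure_distr pre)
  also have "\<dots> = ennreal ((fst u - fst l) * (snd u - snd l))"
  proof -
    have "\<forall>b\<in>Basis. L \<bullet> b \<le> U \<bullet> b"
      using le1 le2 by (simp add: Basis_real2 inner_axis L_def U_def)
    then show ?thesis
      by (simp add: emeasure_lborel_box_eq prod_cart_basis2 inner_axis L_def U_def)
  qed
  also have "\<dots> = (\<Prod>b\<in>Basis. (u - l) \<bullet> b)"
    by (cases l; cases u) (simp add: Basis_prod_def prod.insert mult.commute)
  finally show "emeasure (distr lborel borel (\<lambda>v::real^2. (v$1, v$2))) (box l u) = (\<Prod>b\<in>Basis. (u - l) \<bullet> b)" .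
qed simp



definition e2c :: "real^2 \<Rightarrow> complex" where "e2c v = Complex (v$1) (v$2)"
definition c2e :: "complex \<Rightarrow> real^2" where "c2e w = (\<chi> i. if i = 1 then Re w else Im w)"

lemma c2e_e2c[simp]: "c2e (e2c v) = v"
  unfolding c2e_def e2c_def vec_eq_iff using exhaust_2 by auto

lemma e2c_c2e[simp]: "e2c (c2e w) = w"
  unfolding c2e_def e2c_def by (simp add: complex_eq_iff)

lemma linear_e2c: "linear e2c"
  by (rule linearI) (auto simp: e2c_def complex_eq_iff)

lemma linear_c2e: "linear c2e"
  by (rule linearI) (auto simp: c2e_def vec_eq_iff)

lemma bl_e2c: "bounded_linear e2c" using linear_e2c linear_conv_bounded_linear by blast
lemma bl_c2e: "bounded_linear c2e" using linear_c2e linear_conv_bounded_linear by blast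

lemma cont_e2c: "continuous_on S e2c"
  using bl_e2c linear_continuous_on by blast

lemma c2e_image: "c2e ` X = e2c -` X"
  by (auto simp: image_iff) (metis c2e_e2c)

lemma e2c_axis1[simp]: "e2c (axis 1 1) = 1"
  by (simp add: e2c_def axis_def complex_eq_iff)
lemma e2c_axis2[simp]: "e2c (axis 2 1) = \<i>"
  by (simp add: e2c_def axis_def complex_eq_iff)

lemma Re_e2c[simp]: "Re (e2c v) = v$1" by (simp add: e2c_def)
lemma Im_e2c[simp]: "Im (e2c v) = v$2" by (simp add: e2c_def)

lemma c2e_nth1[simp]: "c2e w $ 1 = Re w" by (simp add: c2e_def)
lemma c2e_nth2[simp]: "c2e w $ 2 = Im w" by (simp add: c2e_def)

lemma det_mult_map: "\<bar>det (matrix (\<lambda>h. c2e (d * e2c h)))\<bar> = (cmod d)^2"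
proof -
  have "det (matrix (\<lambda>h. c2e (d * e2c h))) = Re d * Re d - (- Im d) * Im d"
    by (simp add: det_2 matrix_def axis_def)
  also have "\<dots> = (cmod d)^2"
    by (subst cmod_power2) (simp add: power2_eq_square)
  finally show ?thesis by simp
qed

lemma area_bound:
  fixes g :: "complex \<Rightarrow> complex" and A :: "complex set" and c :: real
  assumes A: "open A" and hol: "g holomorphic_on A" and inj: "inj_on g A"
    and img: "g ` A \<subseteq> {w. 0 < Re w \<and> Re w < c \<and> 0 < Im w \<and> Im w < 1}"
    and c: "0 < c"
  shows "(\<integral>\<^sup>+v. ennreal ((cmod (deriv g (e2c v)))^2) * indicator (e2c -` A) v \<partial>lborel) \<le> ennreal c"
proof -
  define S2 where "S2 = e2c -` A"
  define G where "G = (\<lambda>v. c2e (g (e2c v)))"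
  define f' where "f' = (\<lambda>v h. c2e (deriv g (e2c v) * e2c h))"
  have oS2: "open S2" unfolding S2_def
    by (rule open_vimage[OF A cont_e2c])
  have der: "(G has_derivative f' v) (at v within S2)" if "v \<in> S2" for v
  proof -
    have "(g has_field_derivative deriv g (e2c v)) (at (e2c v))"
      using holomorphic_derivI[OF hol A] that by (simp add: S2_def)
    then have g': "(g has_derivative (\<lambda>h. deriv g (e2c v) * h)) (at (e2c v))"
      by (simp add: has_field_derivative_def)
    have "((\<lambda>v. g (e2c v)) has_derivative (\<lambda>h. deriv g (e2c v) * e2c h)) (at v within S2)"
      using has_derivative_compose[OF bounded_linear_imp_has_derivative[OF bl_e2c] g'] by simp
    from has_derivative_compose[OF this bounded_linear_imp_has_derivative[OF bl_c2e]]
    show ?thesis unfolding G_def f'_def .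
  qed
  have injG: "inj_on G S2"
  proof (rule inj_onI)
    fix v w assume v: "v \<in> S2" and w: "w \<in> S2" and e: "G v = G w"
    then have "e2c (c2e (g (e2c v))) = e2c (c2e (g (e2c w)))" unfolding G_def by simp
    then have "g (e2c v) = g (e2c w)" by simp
    then have "e2c v = e2c w" using inj v w unfolding S2_def inj_on_def by blast
    then have "c2e (e2c v) = c2e (e2c w)" by simp
    then show "v = w" by simp
  qed
  have GS2: "G ` S2 = e2c -` (g ` A)"
  proof -
    have r: "range e2c = UNIV" by (metis e2c_c2e surjI)
    have "e2c ` S2 = A" unfolding S2_def image_vimage_eq r by simp
    have "G ` S2 = c2e ` (g ` (e2c ` S2))" unfolding G_def image_image by (rule refl)
    then show ?thesis using \<open>e2c ` S2 = A\<close> c2e_image by simp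
  qed
  have oGS2: "open (G ` S2)"
    unfolding GS2 by (rule open_vimage[OF open_mapping_thm3[OF hol A inj] cont_e2c])
  define B where "B = box (c2e 0) (c2e (Complex c 1))"
  have subB: "G ` S2 \<subseteq> B"
  proof
    fix x assume "x \<in> G ` S2"
    then have "e2c x \<in> g ` A" unfolding GS2 by simp
    then have "e2c x \<in> {w. 0 < Re w \<and> Re w < c \<and> 0 < Im w \<and> Im w < 1}" using img by blast
    then have "0 < x$1 \<and> x$1 < c \<and> 0 < x$2 \<and> x$2 < 1" by simp
    then show "x \<in> B" unfolding B_def by (simp add: mem_box Basis_real2 inner_axis)
  qed
  have bB: "bounded B" unfolding B_def by simp
  have lm: "G ` S2 \<in> lmeasurable"
    using lmeasurable_open[OF bounded_subset[OF bB subB] oGS2] .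
  have "measure lebesgue (G ` S2) \<le> measure lebesgue B"
  proof -
    have lB: "B \<in> lmeasurable" unfolding B_def by simp
    show ?thesis using measure_mono_fmeasurable[OF subB fmeasurableD[OF lm] lB] .
  qed
  also have "measure lebesgue B \<le> c"
  proof -
    have "\<forall>b\<in>Basis. c2e 0 \<bullet> b \<le> c2e (Complex c 1) \<bullet> b" using c by (simp add: Basis_real2 inner_axis)
    then have "measure lborel B = c" unfolding B_def by (simp add: measure_lborel_box_eq prod_cart_basis2 inner_axis)
    moreover have "measure lebesgue B = measure lborel B"
      unfolding B_def by (simp add: measure_completion)
    ultimately show ?thesis by simp
  qed
  finally have mle: "measure lebesgue (G ` S2) \<le> c" .
  have hi: "((\<lambda>v. \<bar>det (matrix (f' v))\<bar>) has_integral measure lebesgue (G ` S2)) S2"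
  proof -
    have sl: "S2 \<in> sets lebesgue"
      using oS2 by (simp add: borel_open sets_completionI_sets)
    show ?thesis
      using iffD1[OF has_measure_differentiable_image[OF sl der injG]] lm by blast
  qed
  have "(\<integral>\<^sup>+v. ennreal ((cmod (deriv g (e2c v)))^2) * indicator S2 v \<partial>lborel) = ennreal (measure lebesgue (G ` S2))"
  proof -
    have "(\<integral>\<^sup>+v. ennreal \<bar>det (matrix (f' v))\<bar> * indicator S2 v \<partial>lborel) = ennreal (measure lebesgue (G ` S2))"
      by (rule nn_integral_has_integral_lebesgue'[OF _ hi]) simp
    moreover have "\<bar>det (matrix (f' v))\<bar> = (cmod (deriv g (e2c v)))^2" for v
      unfolding f'_def by (rule det_mult_map)
    ultimately show ?thesis by simp
  qed
  also have "\<dots> \<le> ennreal c" using mle by (rule ennreal_leI)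
  finally show ?thesis unfolding S2_def .
qed



lemma vd_Complex: "((\<lambda>y. Complex x y) has_vector_derivative \<i>) (at y)"
proof -
  have e: "(\<lambda>y. Complex x y) = (\<lambda>y. complex_of_real x + y *\<^sub>R \<i>)"
    by (auto simp: complex_eq_iff)
  show ?thesis unfolding e
    by (auto intro!: derivative_eq_intros simp: has_vector_derivative_def)
qed

lemma line_lower:
  fixes g :: "complex \<Rightarrow> complex" and x c y1 \<delta> :: real
  assumes S: "open S" and hol: "g holomorphic_on S"
    and seg: "\<And>y. y \<in> {\<delta>..y1} \<Longrightarrow> Complex x y \<in> S"
    and dy: "\<delta> < y1" and f\<delta>: "Re (g (Complex x \<delta>)) < c" and fy1: "c \<le> Re (g (Complex x y1))"
  shows "\<exists>t \<in> {\<delta><..y1}. (\<forall>y\<in>{\<delta>..<t}. Re (g (Complex x y)) < c) \<and>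
           ((\<lambda>y. cmod (deriv g (Complex x y))) has_integral integral {\<delta>..t} (\<lambda>y. cmod (deriv g (Complex x y)))) {\<delta>..t} \<and>
           c - Re (g (Complex x \<delta>)) \<le> integral {\<delta>..t} (\<lambda>y. cmod (deriv g (Complex x y)))"
proof -
  define f where "f = (\<lambda>y. Re (g (Complex x y)))"
  have contC: "continuous_on T (\<lambda>y. Complex x y)" for T
    by (auto simp: Complex_eq intro!: continuous_intros)
  have contg: "continuous_on S g" using hol holomorphic_on_imp_continuous_on by blast
  have contf: "continuous_on {\<delta>..y1} f"
    unfolding f_def
    by (intro continuous_intros continuous_on_compose2[OF contg contC]) (use seg in auto)
  define K where "K = {\<delta>..y1} \<inter> f -` {c..}"
  have cK: "closed K" unfolding K_def
    by (rule continuous_closed_preimage[OF contf]) auto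
  have "bounded K" unfolding K_def by (intro bounded_Int) simp
  then have kK: "compact K" using cK by (simp add: compact_eq_bounded_closed)
  have y1K: "y1 \<in> K" using fy1 dy by (simp add: K_def f_def)
  obtain t where tK: "t \<in> K" and tmin: "\<And>s. s \<in> K \<Longrightarrow> t \<le> s"
    using compact_attains_inf[OF kK] y1K by blast
  have td: "\<delta> < t"
  proof -
    have "\<delta> \<le> t" using tK by (simp add: K_def)
    moreover have "t \<noteq> \<delta>" using tK f\<delta> by (auto simp: K_def f_def)
    ultimately show ?thesis by simp
  qed
  have ty1: "t \<le> y1" using tK by (simp add: K_def)
  have below: "\<forall>y\<in>{\<delta>..<t}. f y < c"
  proof
    fix y assume y: "y \<in> {\<delta>..<t}"
    then have "y \<notin> K" using tmin by force
    then show "f y < c" using y ty1 by (auto simp: K_def)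
  qed
  have segt: "Complex x y \<in> S" if "y \<in> {\<delta>..t}" for y using seg that ty1 by auto
  have contd: "continuous_on {\<delta>..t} (\<lambda>y. deriv g (Complex x y))"
    by (rule continuous_on_compose2[OF holomorphic_on_imp_continuous_on[OF holomorphic_deriv[OF hol S]] contC])
       (use segt in auto)
  have intn: "(\<lambda>y. cmod (deriv g (Complex x y))) integrable_on {\<delta>..t}"
    by (rule integrable_continuous_interval) (intro continuous_intros contd)
  have intd: "(\<lambda>y. \<i> * deriv g (Complex x y)) integrable_on {\<delta>..t}"
    by (rule integrable_continuous_interval) (intro continuous_intros contd)
  have vd: "((\<lambda>y. g (Complex x y)) has_vector_derivative (\<i> * deriv g (Complex x y))) (at y within {\<delta>..t})"
    if "y \<in> {\<delta>..t}" for y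
  proof -
    have "(g has_field_derivative deriv g (Complex x y)) (at (Complex x y))"
      using holomorphic_derivI[OF hol S segt[OF that]] .
    from field_vector_diff_chain_at[OF vd_Complex this]
    have "((\<lambda>y. g (Complex x y)) has_vector_derivative (\<i> * deriv g (Complex x y))) (at y)"
      by (simp add: o_def)
    then show ?thesis using has_vector_derivative_at_within by blast
  qed
  have ftc: "((\<lambda>y. \<i> * deriv g (Complex x y)) has_integral (g (Complex x t) - g (Complex x \<delta>))) {\<delta>..t}"
    using fundamental_theorem_of_calculus[OF less_imp_le[OF td] vd] by simp
  have "norm (g (Complex x t) - g (Complex x \<delta>)) \<le> integral {\<delta>..t} (\<lambda>y. cmod (deriv g (Complex x y)))"
  proof -
    have "norm (integral {\<delta>..t} (\<lambda>y. \<i> * deriv g (Complex x y))) \<le> integral {\<delta>..t} (\<lambda>y. cmod (deriv g (Complex x y)))"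
      by (rule integral_norm_bound_integral[OF intd intn]) (simp add: norm_mult)
    then show ?thesis using integral_unique[OF ftc] by simp
  qed
  moreover have "c - f \<delta> \<le> norm (g (Complex x t) - g (Complex x \<delta>))"
  proof -
    have "c \<le> f t" using tK by (simp add: K_def)
    then have "c - f \<delta> \<le> Re (g (Complex x t) - g (Complex x \<delta>))" by (simp add: f_def)
    also have "\<dots> \<le> norm (g (Complex x t) - g (Complex x \<delta>))" by (rule complex_Re_le_cmod)
    finally show ?thesis .
  qed
  ultimately show ?thesis
    using td ty1 below intn by (intro bexI[of _ t]) (auto simp: f_def integrable_integral)
qed



lemma meas_ind_cont:
  fixes k :: "real \<times> real \<Rightarrow> real"
  assumes U: "open U" and k: "continuous_on U k"
  shows "(\<lambda>p. ennreal (k p) * indicator U p) \<in> borel_measurable borel"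
proof -
  have m[measurable]: "(\<lambda>p. indicator U p *\<^sub>R k p) \<in> borel_measurable borel"
    by (rule borel_measurable_continuous_on_indicator[OF borel_open[OF U] k])
  have "(\<lambda>p. ennreal (indicator U p *\<^sub>R k p)) \<in> borel_measurable borel" by measurable
  moreover have "(\<lambda>p. ennreal (k p) * indicator U p) = (\<lambda>p. ennreal (indicator U p *\<^sub>R k p))"
    by (auto simp: fun_eq_iff indicator_def)
  ultimately show ?thesis by simp
qed

definition cp :: "real \<times> real \<Rightarrow> complex" where "cp p = Complex (fst p) (snd p)"

lemma cont_cp: "continuous_on T cp"
  unfolding cp_def by (auto simp: Complex_eq intro!: continuous_intros)

lemma cp_e2c: "cp (v$1, v$2) = e2c v" by (simp add: cp_def e2c_def)

lemma key_area:
  fixes g :: "complex \<Rightarrow> complex" and a b c :: real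
  assumes hol: "g holomorphic_on {z. a < Re z \<and> Re z < b \<and> 0 < Im z \<and> Im z < 1}"
    and inj: "inj_on g {z. a < Re z \<and> Re z < b \<and> 0 < Im z \<and> Im z < 1}"
    and img: "g ` {z. a < Re z \<and> Re z < b \<and> 0 < Im z \<and> Im z < 1} \<subseteq> {w. 0 < Re w \<and> 0 < Im w \<and> Im w < 1}"
    and c: "0 < c" and ab: "a < b"
    and lim: "\<And>x. a < x \<Longrightarrow> x < b \<Longrightarrow> ((\<lambda>y. Re (g (Complex x y))) \<longlongrightarrow> 0) (at_right 0)"
    and hit: "\<And>x. a < x \<Longrightarrow> x < b \<Longrightarrow> \<exists>y1. 0 < y1 \<and> y1 < 1 \<and> c \<le> Re (g (Complex x y1))"
  shows "(b - a) * c \<le> 1"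
proof -
  define S where "S = {z. a < Re z \<and> Re z < b \<and> 0 < Im z \<and> Im z < 1}"
  have oS: "open S" unfolding S_def
    by (intro open_Collect_conj open_Collect_less continuous_intros)
  have holS: "g holomorphic_on S" using hol S_def by simp
  have contg: "continuous_on S g" using holS holomorphic_on_imp_continuous_on by blast
  define A where "A = S \<inter> g -` {w. Re w < c}"
  have oA: "open A" unfolding A_def
    by (rule continuous_open_preimage[OF contg oS]) (intro open_Collect_less continuous_intros)
  have AS: "A \<subseteq> S" unfolding A_def by blast
  have holA: "g holomorphic_on A" using holomorphic_on_subset[OF holS AS] .
  have injA: "inj_on g A" using inj_on_subset[OF inj[folded S_def] AS] .
  have imgA: "g ` A \<subseteq> {w. 0 < Re w \<and> Re w < c \<and> 0 < Im w \<and> Im w < 1}"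
    using img unfolding A_def S_def by auto
  have area: "(\<integral>\<^sup>+v. ennreal ((cmod (deriv g (e2c v)))^2) * indicator (e2c -` A) v \<partial>lborel) \<le> ennreal c"
    by (rule area_bound[OF oA holA injA imgA c])
  define A' where "A' = cp -` A"
  have oA': "open A'" unfolding A'_def by (rule open_vimage[OF oA cont_cp])
  have contd: "continuous_on A' (\<lambda>p. deriv g (cp p))"
    by (rule continuous_on_compose2[OF holomorphic_on_imp_continuous_on[OF holomorphic_deriv[OF holA oA]] cont_cp])
       (auto simp: A'_def)
  define F where "F = (\<lambda>p. ennreal ((cmod (deriv g (cp p)))^2) * indicator A' p)"
  define H where "H = (\<lambda>p. ennreal (cmod (deriv g (cp p))) * indicator A' p)"
  have mF[measurable]: "F \<in> borel_measurable borel" unfolding F_def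
    by (rule meas_ind_cont[OF oA']) (intro continuous_intros contd)
  have mH[measurable]: "H \<in> borel_measurable borel" unfolding H_def
    by (rule meas_ind_cont[OF oA']) (intro continuous_intros contd)
  have mT: "(\<lambda>v::real^2. (v$1, v$2)) \<in> measurable lborel borel"
    by (simp add: borel_measurable_continuous_onI continuous_intros)
  have intF: "(\<integral>\<^sup>+p. F p \<partial>lborel) \<le> ennreal c"
  proof -
    have "(\<integral>\<^sup>+p. F p \<partial>lborel) = (\<integral>\<^sup>+p. F p \<partial>(distr lborel borel (\<lambda>v::real^2. (v$1, v$2))))"
      by (simp add: lborel_real2_pair)
    also have "\<dots> = (\<integral>\<^sup>+v. F ((v::real^2)$1, v$2) \<partial>lborel)"
      by (rule nn_integral_distr[OF mT]) (simp add: measurable_distr_eq1)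
    also have "\<dots> = (\<integral>\<^sup>+v. ennreal ((cmod (deriv g (e2c v)))^2) * indicator (e2c -` A) v \<partial>lborel)"
      by (simp add: F_def A'_def cp_e2c indicator_def)
    finally show ?thesis using area by simp
  qed
  have mA': "A' \<in> sets lborel" using oA' by simp
  have eA': "emeasure lborel A' \<le> ennreal (b - a)"
  proof -
    have "A' \<subseteq> box (a, 0) (b, 1)"
      by (auto simp: A'_def A_def S_def cp_def mem_box Basis_prod_def)
    then have "emeasure lborel A' \<le> emeasure lborel (box (a, 0::real) (b, 1::real))"
      by (rule emeasure_mono) simp
    also have "\<dots> = ennreal (b - a)"
      using ab by (simp add: emeasure_lborel_box_eq Basis_prod_def prod.insert)
    finally show ?thesis .
  qed
  have upper: "(\<integral>\<^sup>+p. H p \<partial>lborel) \<le> ennreal (1/2 + c * (b - a) / 2)"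
  proof -
    have pw: "H p \<le> ennreal (1 / (2*c)) * F p + ennreal (c/2) * indicator A' p" for p
    proof (cases "p \<in> A'")
      case True
      define d where "d = cmod (deriv g (cp p))"
      have "d \<le> d^2 / (2*c) + c/2"
      proof -
        have "0 \<le> (d - c)^2" by simp
        then have "2*c*d \<le> d^2 + c^2" by (simp add: power2_eq_square algebra_simps)
        then show ?thesis using c by (simp add: field_simps power2_eq_square)
      qed
      then have "ennreal d \<le> ennreal (d^2 / (2*c) + c/2)" by (rule ennreal_leI)
      also have "\<dots> = ennreal (1 / (2*c) * d^2) + ennreal (c/2)"
        using c by (subst ennreal_plus[symmetric]) auto
      also have "ennreal (1 / (2*c) * d^2) = ennreal (1 / (2*c)) * ennreal (d^2)"
        using c by (intro ennreal_mult) auto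
      finally show ?thesis using True by (simp add: H_def F_def d_def)
    next
      case False
      then show ?thesis by (simp add: H_def)
    qed
    have "(\<integral>\<^sup>+p. H p \<partial>lborel) \<le> (\<integral>\<^sup>+p. ennreal (1 / (2*c)) * F p + ennreal (c/2) * indicator A' p \<partial>lborel)"
      by (rule nn_integral_mono) (rule pw)
    also have "\<dots> = ennreal (1 / (2*c)) * (\<integral>\<^sup>+p. F p \<partial>lborel) + ennreal (c/2) * emeasure lborel A'"
      using mA' by (simp add: nn_integral_add nn_integral_cmult nn_integral_cmult_indicator)
    also have "\<dots> \<le> ennreal (1 / (2*c)) * ennreal c + ennreal (c/2) * ennreal (b - a)"
      by (intro add_mono mult_left_mono intF eA') auto
    also have "\<dots> = ennreal (1 / (2*c) * c) + ennreal (c/2 * (b - a))"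
    proof -
      have e1: "ennreal (1 / (2*c)) * ennreal c = ennreal (1 / (2*c) * c)"
        by (rule ennreal_mult[symmetric]) (use c in auto)
      have e2: "ennreal (c/2) * ennreal (b - a) = ennreal (c/2 * (b - a))"
        by (rule ennreal_mult[symmetric]) (use c ab in auto)
      show ?thesis by (simp only: e1 e2)
    qed
    also have "\<dots> = ennreal (1 / (2*c) * c + c/2 * (b - a))"
      by (rule ennreal_plus[symmetric]) (use c ab in auto)
    also have "\<dots> = ennreal (1/2 + c * (b - a) / 2)"
      by (rule arg_cong[where f=ennreal]) (use c in \<open>simp add: field_simps\<close>)
    finally show ?thesis .
  qed
  have perx: "ennreal c \<le> (\<integral>\<^sup>+y. H (x, y) \<partial>lborel)" if x: "a < x" "x < b" for x
  proof (rule ennreal_le_epsilon)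
    fix e :: real assume e: "0 < e"
    obtain y1 where y1: "0 < y1" "y1 < 1" "c \<le> Re (g (Complex x y1))" using hit[OF x] by blast
    have "\<forall>\<^sub>F y in at_right 0. dist (Re (g (Complex x y))) 0 < min e c"
      by (rule tendstoD[OF lim[OF x]]) (use e c in simp)
    then obtain bb where bb: "bb > 0" "\<And>y. 0 < y \<Longrightarrow> y < bb \<Longrightarrow> \<bar>Re (g (Complex x y))\<bar> < min e c"
      unfolding eventually_at_right_field by auto
    define \<delta> where "\<delta> = min bb y1 / 2"
    have d0: "0 < \<delta>" "\<delta> < y1" "\<delta> < bb" using bb y1 by (auto simp: \<delta>_def)
    have fd: "\<bar>Re (g (Complex x \<delta>))\<bar> < min e c" using bb(2)[OF d0(1) d0(3)] .
    have fdc: "Re (g (Complex x \<delta>)) < c" using fd by auto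
    have seg: "Complex x y \<in> S" if "y \<in> {\<delta>..y1}" for y
      using that x d0 y1 by (auto simp: S_def)
    obtain t where t: "t \<in> {\<delta><..y1}" and below: "\<forall>y\<in>{\<delta>..<t}. Re (g (Complex x y)) < c"
      and hi: "((\<lambda>y. cmod (deriv g (Complex x y))) has_integral integral {\<delta>..t} (\<lambda>y. cmod (deriv g (Complex x y)))) {\<delta>..t}"
      and ge: "c - Re (g (Complex x \<delta>)) \<le> integral {\<delta>..t} (\<lambda>y. cmod (deriv g (Complex x y)))"
      using line_lower[OF oS holS seg d0(2) fdc y1(3)] by auto
    define I where "I = integral {\<delta>..t} (\<lambda>y. cmod (deriv g (Complex x y)))"
    have "(\<integral>\<^sup>+y. ennreal (cmod (deriv g (Complex x y))) * indicator {\<delta>..t} y \<partial>lborel) = ennreal I"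
      unfolding I_def by (rule nn_integral_has_integral_lebesgue'[OF _ hi]) simp
    moreover have "(\<integral>\<^sup>+y. ennreal (cmod (deriv g (Complex x y))) * indicator {\<delta>..t} y \<partial>lborel) \<le> (\<integral>\<^sup>+y. H (x, y) \<partial>lborel)"
    proof (rule nn_integral_mono_AE)
      show "AE y in lborel. ennreal (cmod (deriv g (Complex x y))) * indicator {\<delta>..t} y \<le> H (x, y)"
        using AE_lborel_singleton[of t]
      proof eventually_elim
        case (elim y)
        show ?case
        proof (cases "y \<in> {\<delta>..t}")
          case True
          then have "y \<in> {\<delta>..<t}" using elim by auto
          then have "(x, y) \<in> A'"
            using below seg t by (auto simp: A'_def A_def cp_def)
          then show ?thesis using True by (simp add: H_def cp_def)
        qed simp
      qed
    qed
    ultimately have "ennreal I \<le> (\<integral>\<^sup>+y. H (x, y) \<partial>lborel)" by simp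
    moreover have "c \<le> I + e" using ge fd unfolding I_def by auto
    ultimately show "ennreal c \<le> (\<integral>\<^sup>+y. H (x, y) \<partial>lborel) + ennreal e"
    proof -
      have "ennreal c \<le> ennreal (I + e)" using \<open>c \<le> I + e\<close> by (rule ennreal_leI)
      also have "\<dots> = ennreal I + ennreal e"
      proof -
        have "0 \<le> I" unfolding I_def by (rule integral_nonneg[OF has_integral_integrable[OF hi]]) simp
        then show ?thesis using e by (simp add: ennreal_plus)
      qed
      also have "\<dots> \<le> (\<integral>\<^sup>+y. H (x, y) \<partial>lborel) + ennreal e"
        using \<open>ennreal I \<le> _\<close> by (rule add_right_mono)
      finally show ?thesis .
    qed
  qed
  have lower: "ennreal (c * (b - a)) \<le> (\<integral>\<^sup>+p. H p \<partial>lborel)"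
  proof -
    have "ennreal (c * (b - a)) = ennreal c * emeasure lborel {a<..<b}"
      using ab c by (simp add: ennreal_mult)
    also have "\<dots> = (\<integral>\<^sup>+x. ennreal c * indicator {a<..<b} x \<partial>lborel)"
      by (simp add: nn_integral_cmult_indicator)
    also have "\<dots> \<le> (\<integral>\<^sup>+x. (\<integral>\<^sup>+y. H (x, y) \<partial>lborel) \<partial>lborel)"
      by (rule nn_integral_mono) (auto simp: indicator_def intro: perx)
    also have "\<dots> = (\<integral>\<^sup>+p. H p \<partial>(lborel \<Otimes>\<^sub>M lborel))"
      by (rule lborel.nn_integral_fst) (simp add: lborel_prod)
    also have "\<dots> = (\<integral>\<^sup>+p. H p \<partial>lborel)" by (simp add: lborel_prod)
    finally show ?thesis .
  qed
  from order.trans[OF lower upper] have "c * (b - a) \<le> 1/2 + c * (b - a) / 2"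
    using c ab by (subst (asm) ennreal_le_iff) auto
  then have "c * (b - a) \<le> 1" by linarith
  then show ?thesis by (simp add: mult.commute)
qed


definition rect :: "real \<Rightarrow> complex set" where
  "rect W = {z. 0 < Re z \<and> Re z < W \<and> 0 < Im z \<and> Im z < 1}"

lemma qmD:
  assumes "quad_map p \<theta> m n \<phi> W"
  shows "0 < W" "\<phi> holomorphic_on ball 0 1" "inj_on \<phi> (ball 0 1)" "\<phi> ` ball 0 1 = rect W"
    "continuous_on (cball 0 1) \<phi>"
    "\<phi> ` marking_arc p \<theta> m = {z. 0 \<le> Re z \<and> Re z \<le> W \<and> Im z = 0}"
    "\<phi> ` marking_arc p \<theta> n = {z. 0 \<le> Re z \<and> Re z \<le> W \<and> Im z = 1}"
  using assms unfolding quad_map_def rect_def by auto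

lemma qm_inverse:
  assumes Q: "quad_map p \<theta> m n \<phi> W"
  obtains \<psi> where "\<psi> holomorphic_on rect W" "\<And>z. z \<in> ball 0 1 \<Longrightarrow> \<psi> (\<phi> z) = z"
    "\<And>u. u \<in> rect W \<Longrightarrow> \<psi> u \<in> ball 0 1 \<and> \<phi> (\<psi> u) = u"
proof -
  obtain \<psi> where h: "\<psi> holomorphic_on (\<phi> ` ball 0 1)"
      "\<And>z. z \<in> ball 0 1 \<Longrightarrow> deriv \<phi> z * deriv \<psi> (\<phi> z) = 1"
      "\<And>z. z \<in> ball 0 1 \<Longrightarrow> \<psi> (\<phi> z) = z"
    by (rule holomorphic_has_inverse[OF qmD(2)[OF Q] open_ball qmD(3)[OF Q]], rule that)
  show ?thesis
  proof (rule that)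
    show "\<psi> holomorphic_on rect W" using h(1) qmD(4)[OF Q] by simp
    show "\<psi> (\<phi> z) = z" if "z \<in> ball 0 1" for z using h(3) that .
    show "\<psi> u \<in> ball 0 1 \<and> \<phi> (\<psi> u) = u" if u: "u \<in> rect W" for u
    proof -
      have "u \<in> \<phi> ` ball 0 1" using u qmD(4)[OF Q] by simp
      then obtain w where w: "w \<in> ball 0 1" "u = \<phi> w" by auto
      then show ?thesis using h(3) by auto
    qed
  qed
qed

lemma qm_closed_rect:
  assumes Q: "quad_map p \<theta> m n \<phi> W" and w: "norm w \<le> 1"
  shows "0 \<le> Re (\<phi> w) \<and> Re (\<phi> w) \<le> W \<and> 0 \<le> Im (\<phi> w) \<and> Im (\<phi> w) \<le> 1"
proof -
  define T where "T = {z. 0 \<le> Re z \<and> Re z \<le> W \<and> 0 \<le> Im z \<and> Im z \<le> 1}"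
  have cT: "closed T" unfolding T_def
    by (intro closed_Collect_conj closed_Collect_le continuous_intros)
  have "\<phi> ` ball 0 1 \<subseteq> T" using qmD(4)[OF Q] by (auto simp: rect_def T_def)
  moreover have cl: "closure (ball (0::complex) 1) = cball 0 1" by simp
  ultimately have "\<phi> ` closure (ball 0 1) \<subseteq> T"
    using image_closure_subset[of "ball 0 1" \<phi> T] cT qmD(5)[OF Q] by simp
  then have "\<phi> ` cball 0 1 \<subseteq> T" using cl by simp
  moreover have "w \<in> cball 0 1" using w by simp
  ultimately have "\<phi> w \<in> T" by blast
  then show ?thesis by (simp add: T_def)
qed

lemma qm_sphere:
  assumes Q: "quad_map p \<theta> m n \<phi> W" and \<zeta>: "norm \<zeta> = 1"
  shows "\<phi> \<zeta> \<notin> rect W"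
proof
  assume u: "\<phi> \<zeta> \<in> rect W"
  obtain \<psi> where hol\<psi>: "\<psi> holomorphic_on rect W" and inv1: "\<And>z. z \<in> ball 0 1 \<Longrightarrow> \<psi> (\<phi> z) = z"
    and inv2: "\<And>u. u \<in> rect W \<Longrightarrow> \<psi> u \<in> ball 0 1 \<and> \<phi> (\<psi> u) = u"
    by (rule qm_inverse[OF Q], rule that)
  have orect: "open (rect W)" unfolding rect_def
    by (intro open_Collect_conj open_Collect_less continuous_intros)
  define z where "z = (\<lambda>k::nat. (1 - inverse (real (Suc k))) *\<^sub>R \<zeta>)"
  have zb: "z k \<in> ball 0 1" for k
  proof -
    have i: "0 < inverse (real (Suc k))" "inverse (real (Suc k)) \<le> 1" by (auto simp: inverse_le_1_iff)
    have "norm (z k) = \<bar>1 - inverse (real (Suc k))\<bar>" using \<zeta> by (simp add: z_def)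
    then show ?thesis using i by simp
  qed
  have zlim: "z \<longlonglongrightarrow> \<zeta>"
  proof -
    have "(\<lambda>k::nat. 1 - inverse (real (Suc k))) \<longlonglongrightarrow> 1 - 0"
      by (intro tendsto_intros LIMSEQ_inverse_real_of_nat)
    then have "(\<lambda>k. (1 - inverse (real (Suc k))) *\<^sub>R \<zeta>) \<longlonglongrightarrow> (1 - 0) *\<^sub>R \<zeta>"
      using tendsto_scaleR[OF _ tendsto_const] by blast
    then show ?thesis by (simp add: z_def)
  qed
  have philim: "(\<lambda>k. \<phi> (z k)) \<longlonglongrightarrow> \<phi> \<zeta>"
  proof (rule continuous_on_tendsto_compose[OF qmD(5)[OF Q] zlim])
    show "\<zeta> \<in> cball 0 1" using \<zeta> by simp
    have "z k \<in> cball 0 1" for k using zb[of k] by simp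
    then show "\<forall>\<^sub>F k in sequentially. z k \<in> cball 0 1" by simp
  qed
  have "isCont \<psi> (\<phi> \<zeta>)"
    using holomorphic_on_imp_continuous_on[OF hol\<psi>] continuous_on_eq_continuous_at[OF orect] u by blast
  then have "(\<lambda>k. \<psi> (\<phi> (z k))) \<longlonglongrightarrow> \<psi> (\<phi> \<zeta>)"
    using isCont_tendsto_compose philim by blast
  then have "z \<longlonglongrightarrow> \<psi> (\<phi> \<zeta>)" using inv1 zb by simp
  then have "\<zeta> = \<psi> (\<phi> \<zeta>)" using zlim LIMSEQ_unique by blast
  then show False using inv2[OF u] \<zeta> by auto
qed


lemma norm_exp_it: "norm (exp (\<i> * t)) = exp (- Im t)"
  by simp

lemma qm_real_near:
  assumes Q: "quad_map p \<theta> m n \<phi> W" and w: "norm w = 1"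
    and x: "0 < x" "x < W" and d: "dist (\<phi> w) (of_real x) < min (min x (W - x)) 1"
  shows "Im (\<phi> w) = 0"
proof -
  have n: "\<phi> w \<notin> rect W" using qm_sphere[OF Q w] .
  have c: "0 \<le> Im (\<phi> w)" using qm_closed_rect[OF Q] w by simp
  have "\<bar>Re (\<phi> w) - x\<bar> < min (min x (W - x)) 1" "\<bar>Im (\<phi> w)\<bar> < min (min x (W - x)) 1"
    using d abs_Re_le_cmod[of "\<phi> w - of_real x"] abs_Im_le_cmod[of "\<phi> w - of_real x"]
    by (auto simp: dist_norm)
  then have "0 < Re (\<phi> w)" "Re (\<phi> w) < W" "Im (\<phi> w) < 1" by auto
  then have "\<not> 0 < Im (\<phi> w)" using n by (auto simp: rect_def)
  then show ?thesis using c by simp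
qed

lemma qm_loc:
  assumes Q: "quad_map p \<theta> m n \<phi> W" and \<zeta>: "norm \<zeta> = 1"
    and x: "\<phi> \<zeta> = of_real x" "0 < x" "x < W" and r: "0 < r"
  shows "\<exists>s>0. \<forall>q. 0 < Im q \<and> cmod (q - of_real x) < s \<longrightarrow> (\<exists>z\<in>ball 0 1. cmod (z - \<zeta>) < r \<and> \<phi> z = q)"
proof -
  note hol = qmD(2)[OF Q] and inj = qmD(3)[OF Q] and img = qmD(4)[OF Q] and cont = qmD(5)[OF Q]
  define \<mu> where "\<mu> = min (min x (W - x)) 1"
  have \<mu>: "0 < \<mu>" using x by (simp add: \<mu>_def)
  obtain \<rho>0 where \<rho>0: "\<rho>0 > 0" "\<And>w. w \<in> cball 0 1 \<Longrightarrow> dist w \<zeta> < \<rho>0 \<Longrightarrow> dist (\<phi> w) (\<phi> \<zeta>) < \<mu>"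
    using cont \<zeta> \<mu> unfolding continuous_on_iff by (metis mem_cball_0 order_refl)
  have realpt: "Im (\<phi> w) = 0" if "norm w = 1" "dist w \<zeta> < \<rho>0" for w
    using qm_real_near[OF Q that(1) x(2) x(3)] \<rho>0(2)[of w] that x(1) by (simp add: \<mu>_def)
  define E where "E = (\<lambda>t::complex. exp (\<i> * t))"
  define t1 where "t1 = Arg \<zeta>"
  have \<zeta>E: "E (of_real t1) = \<zeta>"
  proof -
    have "\<zeta> \<noteq> 0" using \<zeta> by auto
    then have "cis t1 = sgn \<zeta>" unfolding t1_def by (rule cis_Arg)
    also have "sgn \<zeta> = \<zeta>" using \<zeta> by (simp add: sgn_div_norm)
    finally show ?thesis by (simp add: E_def cis_conv_exp)
  qed
  have contE: "continuous_on UNIV E" unfolding E_def by (intro continuous_intros)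
  obtain \<rho> where \<rho>: "\<rho> > 0" "\<And>t. dist t (of_real t1) < \<rho> \<Longrightarrow> dist (E t) \<zeta> < min \<rho>0 r"
  proof -
    have "0 < min \<rho>0 r" using \<rho>0 r by simp
    then obtain \<rho> where "\<rho> > 0" "\<forall>t\<in>UNIV. dist t (of_real t1) < \<rho> \<longrightarrow> dist (E t) (E (of_real t1)) < min \<rho>0 r"
      using contE unfolding continuous_on_iff by (meson UNIV_I)
    then show ?thesis using that \<zeta>E by auto
  qed
  define S where "S = ball (complex_of_real t1) \<rho>"
  have normE: "norm (E t) = exp (- Im t)" for t by (simp add: E_def)
  have Eball: "E t \<in> ball 0 1" if "0 < Im t" for t using that by (simp add: normE)
  have Ecball: "E t \<in> cball 0 1" if "0 \<le> Im t" for t using that by (simp add: normE)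
  have cnjS: "cnj ` S \<subseteq> S"
  proof
    fix u assume "u \<in> cnj ` S"
    then obtain t where t: "t \<in> S" "u = cnj t" by auto
    have "dist (cnj t) (of_real t1) = dist t (of_real t1)"
      by (metis complex_cnj_complex_of_real complex_cnj_diff complex_mod_cnj dist_norm)
    then show "u \<in> S" using t by (simp add: S_def dist_commute)
  qed
  define f where "f = (\<lambda>t. \<phi> (E t))"
  have holf: "f holomorphic_on (S \<inter> {z. 0 < Im z})"
  proof -
    have "E holomorphic_on (S \<inter> {z. 0 < Im z})" unfolding E_def by (intro holomorphic_intros)
    moreover have "E ` (S \<inter> {z. 0 < Im z}) \<subseteq> ball 0 1" using Eball by auto
    ultimately have "(\<phi> \<circ> E) holomorphic_on (S \<inter> {z. 0 < Im z})"
      using holomorphic_on_compose_gen[OF _ hol] by blast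
    then show ?thesis by (simp add: f_def o_def)
  qed
  have contf: "continuous_on (S \<inter> {z. 0 \<le> Im z}) f"
    unfolding f_def
    by (rule continuous_on_compose2[OF cont continuous_on_subset[OF contE]]) (use Ecball in auto)
  have realf: "f t \<in> \<real>" if "t \<in> S" "t \<in> \<real>" for t
  proof -
    have "Im t = 0" using that(2) by (simp add: complex_is_Real_iff)
    then have "norm (E t) = 1" by (simp add: normE)
    moreover have "dist (E t) \<zeta> < \<rho>0" using \<rho>(2)[of t] that(1) by (auto simp: S_def dist_commute)
    ultimately have "Im (f t) = 0" using realpt by (simp add: f_def)
    then show ?thesis by (simp add: complex_is_Real_iff)
  qed
  define \<Psi> where "\<Psi> = (\<lambda>t. if 0 \<le> Im t then f t else cnj (f (cnj t)))"
  have hol\<Psi>: "\<Psi> holomorphic_on S"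
    unfolding \<Psi>_def by (rule Schwarz_reflection[OF _ cnjS holf contf realf]) (auto simp: S_def)
  have nc: "\<not> \<Psi> constant_on S"
  proof
    assume "\<Psi> constant_on S"
    then obtain k where k: "\<And>t. t \<in> S \<Longrightarrow> \<Psi> t = k" unfolding constant_on_def by blast
    define ta where "ta = of_real t1 + \<i> * of_real (\<rho>/2)"
    define tb where "tb = of_real t1 + \<i> * of_real (\<rho>/4)"
    have tS: "ta \<in> S" "tb \<in> S" using \<rho> by (auto simp: S_def ta_def tb_def dist_norm norm_mult)
    have Ima: "Im ta = \<rho>/2" "Im tb = \<rho>/4" by (simp_all add: ta_def tb_def)
    have "\<phi> (E ta) = \<phi> (E tb)"
      using k[OF tS(1)] k[OF tS(2)] Ima \<rho> by (simp add: \<Psi>_def f_def)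
    then have "E ta = E tb" using inj Eball Ima \<rho> by (simp add: inj_on_def)
    then have "exp (- (\<rho>/2)) = exp (- (\<rho>/4))" using normE[of ta] normE[of tb] Ima by simp
    then show False using \<rho> by simp
  qed
  have oS: "open S" by (simp add: S_def)
  have "open (\<Psi> ` S)"
    by (rule open_mapping_thm[OF hol\<Psi> oS _ oS subset_refl nc]) (simp add: S_def)
  moreover have "of_real x \<in> \<Psi> ` S"
  proof -
    have "of_real t1 \<in> S" using \<rho> by (simp add: S_def)
    moreover have "\<Psi> (of_real t1) = of_real x" using \<zeta>E x(1) by (simp add: \<Psi>_def f_def)
    ultimately show ?thesis by (metis image_eqI)
  qed
  ultimately obtain s where s: "s > 0" "ball (of_real x) s \<subseteq> \<Psi> ` S"
    unfolding open_contains_ball by blast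
  show ?thesis
  proof (intro exI[of _ s] conjI allI impI s(1))
    fix q assume q: "0 < Im q \<and> cmod (q - of_real x) < s"
    then have "q \<in> ball (of_real x) s" by (simp add: dist_norm norm_minus_commute)
    then obtain t where t: "t \<in> S" "q = \<Psi> t" using s(2) by auto
    have "0 < Im t"
    proof (rule ccontr)
      assume "\<not> 0 < Im t"
      then consider "Im t < 0" | "Im t = 0" by linarith
      then show False
      proof cases
        case 1
        then have "E (cnj t) \<in> ball 0 1" using Eball by simp
        then have "\<phi> (E (cnj t)) \<in> rect W" using img by blast
        then have "0 < Im (\<phi> (E (cnj t)))" by (simp add: rect_def)
        then have "Im q < 0" using t 1 by (simp add: \<Psi>_def f_def)
        then show False using q by simp
      next
        case 2
        then have "t \<in> \<real>" by (simp add: complex_is_Real_iff)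
        then have "f t \<in> \<real>" using realf t(1) by simp
        then have "Im q = 0" using t 2 by (simp add: \<Psi>_def complex_is_Real_iff)
        then show False using q by simp
      qed
    qed
    show "\<exists>z\<in>ball 0 1. cmod (z - \<zeta>) < r \<and> \<phi> z = q"
    proof (intro bexI[of _ "E t"] conjI)
      show "E t \<in> ball 0 1" using Eball \<open>0 < Im t\<close> .
      show "cmod (E t - \<zeta>) < r" using \<rho>(2)[of t] t(1) by (simp add: S_def dist_norm norm_minus_commute)
      show "\<phi> (E t) = q" using t \<open>0 < Im t\<close> by (simp add: \<Psi>_def f_def)
    qed
  qed
qed


lemma arc_sphere: "z \<in> marking_arc p \<theta> k \<Longrightarrow> norm z = 1"
  unfolding marking_arc_def by auto

lemma im_mono:
  assumes M: "ideal_marking p \<theta>" and jk: "j \<le> k" "k < p"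
  shows "\<theta> j \<le> \<theta> k"
  using jk
proof (induction k)
  case 0 then show ?case by simp
next
  case (Suc k)
  show ?case
  proof (cases "j = Suc k")
    case True then show ?thesis by simp
  next
    case False
    then have "j \<le> k" using Suc by simp
    then have "\<theta> j \<le> \<theta> k" using Suc by simp
    also have "\<theta> k < \<theta> (Suc k)" using M Suc(3) by (simp add: ideal_marking_def)
    finally show ?thesis by simp
  qed
qed

lemma im_bounds:
  assumes M: "ideal_marking p \<theta>" and k: "k < p"
  shows "\<theta> 0 \<le> \<theta> k" "\<theta> k < next_angle p \<theta> k" "next_angle p \<theta> k \<le> \<theta> 0 + 2 * pi"
proof -
  have p1: "1 \<le> p" and last: "\<theta> (p - 1) < \<theta> 0 + 2 * pi" using M by (auto simp: ideal_marking_def)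
  show "\<theta> 0 \<le> \<theta> k" using im_mono[OF M _ k] by simp
  have km: "k mod p = k" using k by simp
  show "\<theta> k < next_angle p \<theta> k"
  proof (cases "Suc k < p")
    case True then show ?thesis using M km by (simp add: next_angle_def ideal_marking_def)
  next
    case False
    then have "k = p - 1" using k by simp
    then show ?thesis using last km False by (simp add: next_angle_def)
  qed
  show "next_angle p \<theta> k \<le> \<theta> 0 + 2 * pi"
  proof (cases "Suc k < p")
    case True
    then have "\<theta> (Suc k) \<le> \<theta> (p - 1)" using im_mono[OF M, of "Suc k" "p - 1"] by simp
    then show ?thesis using True km last by (simp add: next_angle_def)
  next
    case False then show ?thesis using km by (simp add: next_angle_def)
  qed
qed

lemma im_order:
  assumes M: "ideal_marking p \<theta>" and jk: "j < k" "k < p"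
  shows "next_angle p \<theta> j \<le> \<theta> k"
proof -
  have "Suc j < p" "j mod p = j" using jk by auto
  then show ?thesis using im_mono[OF M, of "Suc j" k] jk by (simp add: next_angle_def)
qed

lemma cis_eq_imp:
  assumes "cis s = cis t"
  obtains n :: int where "s = t + 2 * pi * of_int n"
proof -
  have "exp (\<i> * complex_of_real s) = exp (\<i> * complex_of_real t)" using assms by (simp add: cis_conv_exp)
  then obtain n :: int where "\<i> * complex_of_real s = \<i> * complex_of_real t + (of_int (2 * n) * pi) * \<i>"
    unfolding exp_eq by blast
  then have "Im (\<i> * complex_of_real s) = Im (\<i> * complex_of_real t + (of_int (2 * n) * pi) * \<i>)" by simp
  then have "s = t + 2 * pi * of_int n" by simp
  then show ?thesis by (rule that)
qed

lemma arcs_open_disjoint: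
  assumes M: "ideal_marking p \<theta>" and j: "j < p" and k: "k < p" and jk: "j \<noteq> k"
    and s: "\<theta> k < s" "s < next_angle p \<theta> k"
    and t: "\<theta> j \<le> t" "t \<le> next_angle p \<theta> j"
    and e: "cis s = cis t"
  shows False
proof -
  obtain n :: int where n: "s = t + 2 * pi * of_int n" using cis_eq_imp[OF e] by blast
  have bk: "\<theta> 0 \<le> \<theta> k" "next_angle p \<theta> k \<le> \<theta> 0 + 2 * pi" using im_bounds[OF M k] by auto
  have bj: "\<theta> 0 \<le> \<theta> j" "next_angle p \<theta> j \<le> \<theta> 0 + 2 * pi" using im_bounds[OF M j] by auto
  have "\<bar>2 * pi * of_int n\<bar> < 2 * pi" using n s t bk bj by auto
  then have "\<bar>of_int n :: real\<bar> < 1" by (simp add: abs_mult)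
  then have "n = 0" by linarith
  then have st: "s = t" using n by simp
  show False
  proof (cases "j < k")
    case True
    then show False using im_order[OF M True k] s t st by simp
  next
    case False
    then have "k < j" using jk by simp
    then show False using im_order[OF M _ j] s t st by fastforce
  qed
qed

lemma arc_open_closure:
  assumes M: "ideal_marking p \<theta>" and k: "k < p"
  shows "marking_arc p \<theta> k \<subseteq> closure (cis ` {\<theta> k <..< next_angle p \<theta> k})"
proof -
  have lt: "\<theta> k < next_angle p \<theta> k" using im_bounds[OF M k] by simp
  have cc: "continuous_on (closure {\<theta> k <..< next_angle p \<theta> k}) cis"
    by (intro continuous_intros)
  have "cis ` closure {\<theta> k <..< next_angle p \<theta> k} \<subseteq> closure (cis ` {\<theta> k <..< next_angle p \<theta> k})"
    by (rule image_closure_subset[OF cc closed_closure closure_subset])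
  then show ?thesis using lt k by (simp add: marking_arc_def)
qed

lemma arc_connected: "connected (marking_arc p \<theta> k)"
  unfolding marking_arc_def
  by (rule connected_continuous_image) (auto intro!: continuous_intros)

lemma arc_compact: "compact (marking_arc p \<theta> k)"
  unfolding marking_arc_def
  by (rule compact_continuous_image) (auto intro!: continuous_intros)


lemma qm_unique:
  assumes Q: "quad_map p \<theta> m n \<phi> W" and z1: "norm \<zeta>1 = 1" and z2: "norm \<zeta>2 = 1"
    and e1: "\<phi> \<zeta>1 = of_real x" and e2: "\<phi> \<zeta>2 = of_real x" and x: "0 < x" "x < W"
  shows "\<zeta>1 = \<zeta>2"
proof (rule ccontr)
  assume ne: "\<zeta>1 \<noteq> \<zeta>2"
  define r where "r = cmod (\<zeta>1 - \<zeta>2) / 2"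
  have r: "0 < r" using ne by (simp add: r_def)
  obtain s1 where s1: "s1 > 0" "\<And>q. 0 < Im q \<and> cmod (q - of_real x) < s1 \<Longrightarrow> \<exists>z\<in>ball 0 1. cmod (z - \<zeta>1) < r \<and> \<phi> z = q"
    using qm_loc[OF Q z1 e1 x r] by blast
  obtain s2 where s2: "s2 > 0" "\<And>q. 0 < Im q \<and> cmod (q - of_real x) < s2 \<Longrightarrow> \<exists>z\<in>ball 0 1. cmod (z - \<zeta>2) < r \<and> \<phi> z = q"
    using qm_loc[OF Q z2 e2 x r] by blast
  define q where "q = of_real x + \<i> * of_real (min s1 s2 / 2)"
  have q: "0 < Im q" "cmod (q - of_real x) < s1" "cmod (q - of_real x) < s2"
    using s1(1) s2(1) by (auto simp: q_def norm_mult)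
  obtain w1 where w1: "w1 \<in> ball 0 1" "cmod (w1 - \<zeta>1) < r" "\<phi> w1 = q" using s1(2) q by blast
  obtain w2 where w2: "w2 \<in> ball 0 1" "cmod (w2 - \<zeta>2) < r" "\<phi> w2 = q" using s2(2) q by blast
  have "w1 = w2" using qmD(3)[OF Q] w1 w2 by (simp add: inj_on_def)
  then have "cmod (\<zeta>1 - \<zeta>2) < 2 * r"
    using w1(2) w2(2) norm_triangle_lt[of "\<zeta>1 - w1" "w2 - \<zeta>2" "2 * r"]
    by (simp add: norm_minus_commute)
  then show False by (simp add: r_def)
qed

lemma qm_bottom_limit:
  assumes Q: "quad_map p \<theta> m n \<phi> W" and x: "0 < x" "x < W"
    and inv: "\<And>u. u \<in> rect W \<Longrightarrow> \<psi> u \<in> ball 0 1 \<and> \<phi> (\<psi> u) = u"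
  shows "\<exists>\<zeta>\<in>marking_arc p \<theta> m. \<phi> \<zeta> = of_real x \<and> ((\<lambda>y. \<psi> (Complex x y)) \<longlongrightarrow> \<zeta>) (at_right 0)"
proof -
  have "of_real x \<in> \<phi> ` marking_arc p \<theta> m" using qmD(6)[OF Q] x by simp
  then obtain \<zeta> where \<zeta>: "\<zeta> \<in> marking_arc p \<theta> m" "\<phi> \<zeta> = of_real x" by auto
  have n\<zeta>: "norm \<zeta> = 1" using arc_sphere[OF \<zeta>(1)] .
  have "((\<lambda>y. \<psi> (Complex x y)) \<longlongrightarrow> \<zeta>) (at_right 0)"
  proof (rule tendstoI)
    fix \<epsilon> :: real assume \<epsilon>: "0 < \<epsilon>"
    define K where "K = cball (0::complex) 1 - ball \<zeta> \<epsilon>"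
    have kK: "compact K" unfolding K_def by (intro compact_diff) auto
    have inrect: "Complex x y \<in> rect W" if "0 < y" "y < 1" for y
      using that x by (simp add: rect_def)
    obtain \<mu> where \<mu>: "\<mu> > 0" "\<And>z. z \<in> K \<Longrightarrow> \<mu> \<le> cmod (\<phi> z - of_real x)"
    proof (cases "K = {}")
      case True then show ?thesis using that[of 1] by auto
    next
      case False
      have cK: "continuous_on K (\<lambda>z. cmod (\<phi> z - of_real x))"
        by (intro continuous_intros continuous_on_subset[OF qmD(5)[OF Q]]) (auto simp: K_def)
      obtain z0 where z0: "z0 \<in> K" "\<And>z. z \<in> K \<Longrightarrow> cmod (\<phi> z0 - of_real x) \<le> cmod (\<phi> z - of_real x)"
        using continuous_attains_inf[OF kK False cK] by blast
      have "cmod (\<phi> z0 - of_real x) \<noteq> 0"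
      proof
        assume "cmod (\<phi> z0 - of_real x) = 0"
        then have e: "\<phi> z0 = of_real x" by simp
        have "norm z0 \<le> 1" using z0(1) by (simp add: K_def)
        moreover have "\<not> norm z0 < 1"
        proof
          assume "norm z0 < 1"
          then have "\<phi> z0 \<in> rect W" using qmD(4)[OF Q] by auto
          then show False using e by (simp add: rect_def)
        qed
        ultimately have "norm z0 = 1" by simp
        then have "z0 = \<zeta>" using qm_unique[OF Q _ n\<zeta> e \<zeta>(2) x] by simp
        then show False using z0(1) \<epsilon> by (simp add: K_def)
      qed
      then show ?thesis using that[of "cmod (\<phi> z0 - of_real x)"] z0 by auto
    qed
    show "\<forall>\<^sub>F y in at_right 0. dist (\<psi> (Complex x y)) \<zeta> < \<epsilon>"
      unfolding eventually_at_right_field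
    proof (intro exI[of _ "min \<mu> 1"] conjI allI impI)
      show "(0::real) < min \<mu> 1" using \<mu> by simp
      fix y :: real assume y: "0 < y" "y < min \<mu> 1"
      have u: "Complex x y \<in> rect W" using inrect y by simp
      have w: "\<psi> (Complex x y) \<in> ball 0 1" "\<phi> (\<psi> (Complex x y)) = Complex x y" using inv[OF u] by auto
      have "cmod (\<phi> (\<psi> (Complex x y)) - of_real x) = y"
        using w(2) y by (simp add: Complex_eq norm_mult)
      then have "\<psi> (Complex x y) \<notin> K" using \<mu>(2) y by force
      then show "dist (\<psi> (Complex x y)) \<zeta> < \<epsilon>" using w(1) by (simp add: K_def dist_commute)
    qed
  qed
  then show ?thesis using \<zeta> by blast
qed

lemma rot_rect: "u \<in> rect W \<Longrightarrow> of_real W + \<i> - u \<in> rect W"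
  by (simp add: rect_def)

lemma qm_rot:
  assumes Q: "quad_map p \<theta> m n \<phi> W"
  shows "quad_map p \<theta> n m (\<lambda>z. of_real W + \<i> - \<phi> z) W"
proof -
  note q = qmD[OF Q]
  define \<rho> where "\<rho> = (\<lambda>w::complex. of_real W + \<i> - w)"
  have \<rho>\<rho>: "\<rho> (\<rho> w) = w" for w by (simp add: \<rho>_def)
  have inv_img: "\<rho> ` X = Y" if "\<And>w. w \<in> X \<Longrightarrow> \<rho> w \<in> Y" "\<And>w. w \<in> Y \<Longrightarrow> \<rho> w \<in> X" for X Y
  proof
    show "\<rho> ` X \<subseteq> Y" using that(1) by auto
    show "Y \<subseteq> \<rho> ` X"
    proof
      fix w assume "w \<in> Y"
      then have "\<rho> w \<in> X" using that(2) by blast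
      then show "w \<in> \<rho> ` X" using \<rho>\<rho>[of w] by (metis image_eqI)
    qed
  qed
  have comp: "(\<lambda>z. of_real W + \<i> - \<phi> z) ` A = \<rho> ` (\<phi> ` A)" for A
    by (simp add: \<rho>_def image_image)
  have r1: "\<rho> ` rect W = rect W" by (rule inv_img) (auto simp: \<rho>_def rect_def)
  have r2: "\<rho> ` {z. 0 \<le> Re z \<and> Re z \<le> W \<and> Im z = 1} = {z. 0 \<le> Re z \<and> Re z \<le> W \<and> Im z = 0}"
    by (rule inv_img) (auto simp: \<rho>_def)
  have r3: "\<rho> ` {z. 0 \<le> Re z \<and> Re z \<le> W \<and> Im z = 0} = {z. 0 \<le> Re z \<and> Re z \<le> W \<and> Im z = 1}"
    by (rule inv_img) (auto simp: \<rho>_def)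
  show ?thesis
    unfolding quad_map_def
  proof (intro conjI)
    show "0 < W" using q(1) .
    show "(\<lambda>z. of_real W + \<i> - \<phi> z) holomorphic_on ball 0 1" using q(2) by (intro holomorphic_intros)
    show "inj_on (\<lambda>z. of_real W + \<i> - \<phi> z) (ball 0 1)" using q(3) by (simp add: inj_on_def)
    show "(\<lambda>z. of_real W + \<i> - \<phi> z) ` ball 0 1 = {z. 0 < Re z \<and> Re z < W \<and> 0 < Im z \<and> Im z < 1}"
      using comp q(4) r1 by (simp add: rect_def)
    show "continuous_on (cball 0 1) (\<lambda>z. of_real W + \<i> - \<phi> z)" using q(5) by (intro continuous_intros)
    show "(\<lambda>z. of_real W + \<i> - \<phi> z) ` marking_arc p \<theta> n = {z. 0 \<le> Re z \<and> Re z \<le> W \<and> Im z = 0}"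
      using comp q(7) r2 by simp
    show "(\<lambda>z. of_real W + \<i> - \<phi> z) ` marking_arc p \<theta> m = {z. 0 \<le> Re z \<and> Re z \<le> W \<and> Im z = 1}"
      using comp q(6) r3 by simp
  qed
qed

lemma qm_side:
  assumes Q: "quad_map p \<theta> m n \<phi> W" and M: "ideal_marking p \<theta>"
    and mp: "m < p" and np: "n < p" and kp: "k < p" and km: "k \<noteq> m" and kn: "k \<noteq> n"
  shows "(\<forall>z\<in>marking_arc p \<theta> k. Re (\<phi> z) = 0) \<or> (\<forall>z\<in>marking_arc p \<theta> k. Re (\<phi> z) = W)"
proof -
  note q = qmD[OF Q]
  note Qr = qm_rot[OF Q]
  define Op where "Op = cis ` {\<theta> k <..< next_angle p \<theta> k}"
  define A where "A = {z::complex. Re z = 0 \<and> 0 \<le> Im z \<and> Im z \<le> 1}"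
  define B where "B = {z::complex. Re z = W \<and> 0 \<le> Im z \<and> Im z \<le> 1}"
  have cA: "closed A" unfolding A_def by (intro closed_Collect_conj closed_Collect_eq closed_Collect_le continuous_intros)
  have cB: "closed B" unfolding B_def by (intro closed_Collect_conj closed_Collect_eq closed_Collect_le continuous_intros)
  have inAB: "\<phi> \<zeta> \<in> A \<union> B" if zO: "\<zeta> \<in> Op" for \<zeta>
  proof -
    obtain s where s: "\<theta> k < s" "s < next_angle p \<theta> k" "\<zeta> = cis s" using zO by (auto simp: Op_def)
    have n\<zeta>: "norm \<zeta> = 1" using s by simp
    have cr: "0 \<le> Re (\<phi> \<zeta>) \<and> Re (\<phi> \<zeta>) \<le> W \<and> 0 \<le> Im (\<phi> \<zeta>) \<and> Im (\<phi> \<zeta>) \<le> 1"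
      using qm_closed_rect[OF Q] n\<zeta> by simp
    have nr: "\<phi> \<zeta> \<notin> rect W" using qm_sphere[OF Q n\<zeta>] .
    show ?thesis
    proof (rule ccontr)
      assume "\<phi> \<zeta> \<notin> A \<union> B"
      then have re: "0 < Re (\<phi> \<zeta>)" "Re (\<phi> \<zeta>) < W" using cr by (auto simp: A_def B_def)
      then have "Im (\<phi> \<zeta>) = 0 \<or> Im (\<phi> \<zeta>) = 1" using nr cr by (auto simp: rect_def)
      then show False
      proof
        assume im0: "Im (\<phi> \<zeta>) = 0"
        define x where "x = Re (\<phi> \<zeta>)"
        have e: "\<phi> \<zeta> = of_real x" using im0 by (simp add: x_def complex_eq_iff)
        have "of_real x \<in> \<phi> ` marking_arc p \<theta> m" using q(6) re by (simp add: x_def)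
        then obtain \<zeta>0 where z0: "\<zeta>0 \<in> marking_arc p \<theta> m" "\<phi> \<zeta>0 = of_real x" by auto
        have "\<zeta> = \<zeta>0" using qm_unique[OF Q n\<zeta> arc_sphere[OF z0(1)] e z0(2)] re by (simp add: x_def)
        then obtain t where t: "\<theta> m \<le> t" "t \<le> next_angle p \<theta> m" "\<zeta> = cis t"
          using z0(1) mp by (auto simp: marking_arc_def)
        show False using arcs_open_disjoint[OF M mp kp _ s(1,2) t(1,2)] km s(3) t(3) by auto
      next
        assume im1: "Im (\<phi> \<zeta>) = 1"
        define x where "x = W - Re (\<phi> \<zeta>)"
        have e: "of_real W + \<i> - \<phi> \<zeta> = of_real x" using im1 by (simp add: x_def complex_eq_iff)
        have x: "0 < x" "x < W" using re by (auto simp: x_def)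
        have "of_real x \<in> (\<lambda>z. of_real W + \<i> - \<phi> z) ` marking_arc p \<theta> n" using qmD(6)[OF Qr] x by simp
        then obtain \<zeta>0 where z0: "\<zeta>0 \<in> marking_arc p \<theta> n" "of_real W + \<i> - \<phi> \<zeta>0 = of_real x" by auto
        have "\<zeta> = \<zeta>0" using qm_unique[OF Qr n\<zeta> arc_sphere[OF z0(1)] e z0(2) x] .
        then obtain t where t: "\<theta> n \<le> t" "t \<le> next_angle p \<theta> n" "\<zeta> = cis t"
          using z0(1) np by (auto simp: marking_arc_def)
        show False using arcs_open_disjoint[OF M np kp _ s(1,2) t(1,2)] kn s(3) t(3) by auto
      qed
    qed
  qed
  have cAB: "closed (A \<union> B)" using cA cB by (rule closed_Un)
  have Osub: "closure Op \<subseteq> cball 0 1"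
  proof -
    have "Op \<subseteq> sphere 0 1" by (auto simp: Op_def)
    then have "closure Op \<subseteq> sphere 0 1" by (simp add: closure_minimal)
    then show ?thesis by auto
  qed
  have "\<phi> ` closure Op \<subseteq> A \<union> B"
    by (rule image_closure_subset[OF continuous_on_subset[OF q(5) Osub] cAB]) (use inAB in auto)
  moreover have "marking_arc p \<theta> k \<subseteq> closure Op" unfolding Op_def by (rule arc_open_closure[OF M kp])
  ultimately have sub: "\<phi> ` marking_arc p \<theta> k \<subseteq> A \<union> B" by blast
  have con: "connected (\<phi> ` marking_arc p \<theta> k)"
  proof (rule connected_continuous_image[OF _ arc_connected])
    have "marking_arc p \<theta> k \<subseteq> cball 0 1" using arc_sphere by fastforce
    then show "continuous_on (marking_arc p \<theta> k) \<phi>" using continuous_on_subset[OF q(5)] by blast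
  qed
  have disj: "A \<inter> B = {}" using q(1) by (auto simp: A_def B_def)
  have "A \<inter> \<phi> ` marking_arc p \<theta> k = {} \<or> B \<inter> \<phi> ` marking_arc p \<theta> k = {}"
    using con cA cB sub disj unfolding connected_closed by blast
  then have "\<phi> ` marking_arc p \<theta> k \<subseteq> B \<or> \<phi> ` marking_arc p \<theta> k \<subseteq> A" using sub by blast
  then show ?thesis by (auto simp: A_def B_def)
qed


lemma key_apply:
  fixes g :: "complex \<Rightarrow> complex" and a b c L W' :: real
  assumes hol: "g holomorphic_on {z. a < Re z \<and> Re z < b \<and> 0 < Im z \<and> Im z < 1}"
    and inj: "inj_on g {z. a < Re z \<and> Re z < b \<and> 0 < Im z \<and> Im z < 1}"
    and img: "g ` {z. a < Re z \<and> Re z < b \<and> 0 < Im z \<and> Im z < 1} \<subseteq> rect W'"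
    and lim: "\<And>x. a < x \<Longrightarrow> x < b \<Longrightarrow> ((\<lambda>y. Re (g (Complex x y))) \<longlongrightarrow> L) (at_right 0)"
    and L: "L = 0 \<or> L = W'"
    and hit: "\<And>x. a < x \<Longrightarrow> x < b \<Longrightarrow> \<exists>y1. 0 < y1 \<and> y1 < 1 \<and> Re (g (Complex x y1)) = c"
    and ba: "1 < b - a" and c: "1 < c" "c < W' - 1"
  shows False
  using L
proof
  assume L0: "L = 0"
  have "(b - a) * c \<le> 1"
  proof (rule key_area[OF hol inj])
    show "g ` {z. a < Re z \<and> Re z < b \<and> 0 < Im z \<and> Im z < 1} \<subseteq> {w. 0 < Re w \<and> 0 < Im w \<and> Im w < 1}"
      using img by (auto simp: rect_def)
    show "((\<lambda>y. Re (g (Complex x y))) \<longlongrightarrow> 0) (at_right 0)" if "a < x" "x < b" for x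
      using lim[OF that] L0 by simp
    show "\<exists>y1>0. y1 < 1 \<and> c \<le> Re (g (Complex x y1))" if "a < x" "x < b" for x
      using hit[OF that] by force
  qed (use c ba in auto)
  moreover have "1 * 1 < (b - a) * c" using ba c by (intro mult_strict_mono) auto
  ultimately show False by simp
next
  assume LW: "L = W'"
  define g2 where "g2 = (\<lambda>w. of_real W' + \<i> - g w)"
  have "(b - a) * (W' - c) \<le> 1"
  proof (rule key_area[of g2])
    show "g2 holomorphic_on {z. a < Re z \<and> Re z < b \<and> 0 < Im z \<and> Im z < 1}"
      unfolding g2_def using hol by (intro holomorphic_intros)
    show "inj_on g2 {z. a < Re z \<and> Re z < b \<and> 0 < Im z \<and> Im z < 1}"
      using inj by (simp add: inj_on_def g2_def)
    show "g2 ` {z. a < Re z \<and> Re z < b \<and> 0 < Im z \<and> Im z < 1} \<subseteq> {w. 0 < Re w \<and> 0 < Im w \<and> Im w < 1}"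
      using img by (auto simp: rect_def g2_def)
    show "((\<lambda>y. Re (g2 (Complex x y))) \<longlongrightarrow> 0) (at_right 0)" if "a < x" "x < b" for x
    proof -
      have "((\<lambda>y. W' - Re (g (Complex x y))) \<longlongrightarrow> W' - L) (at_right 0)"
        by (intro tendsto_intros lim[OF that])
      then show ?thesis using LW by (simp add: g2_def)
    qed
    show "\<exists>y1>0. y1 < 1 \<and> W' - c \<le> Re (g2 (Complex x y1))" if "a < x" "x < b" for x
      using hit[OF that] by (force simp: g2_def)
  qed (use c ba in auto)
  moreover have "1 * 1 < (b - a) * (W' - c)" using ba c by (intro mult_strict_mono) auto
  ultimately show False by simp
qed

lemma core:
  assumes Q: "quad_map p \<theta> m n \<phi> W" and Q': "quad_map p \<theta> m' n' \<phi>' W'"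
    and M: "ideal_marking p \<theta>" and mp: "m < p" and np: "n < p" and m'p: "m' < p" and n'p: "n' < p"
    and d1: "m \<noteq> m'" "m \<noteq> n'" and d2: "m' \<noteq> m" "m' \<noteq> n"
    and z: "z \<in> ball 0 1"
    and zx: "1 < Re (\<phi> z)" "Re (\<phi> z) < W - 1" and zx': "1 < Re (\<phi>' z)" "Re (\<phi>' z) < W' - 1"
  shows False
proof -
  note q = qmD[OF Q] and q' = qmD[OF Q']
  obtain \<psi> where hol\<psi>: "\<psi> holomorphic_on rect W" and inv1: "\<And>z. z \<in> ball 0 1 \<Longrightarrow> \<psi> (\<phi> z) = z"
    and inv2: "\<And>u. u \<in> rect W \<Longrightarrow> \<psi> u \<in> ball 0 1 \<and> \<phi> (\<psi> u) = u"
    by (rule qm_inverse[OF Q], rule that)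
  obtain \<psi>' where hol\<psi>': "\<psi>' holomorphic_on rect W'" and inv1': "\<And>z. z \<in> ball 0 1 \<Longrightarrow> \<psi>' (\<phi>' z) = z"
    and inv2': "\<And>u. u \<in> rect W' \<Longrightarrow> \<psi>' u \<in> ball 0 1 \<and> \<phi>' (\<psi>' u) = u"
    by (rule qm_inverse[OF Q'], rule that)
  define x0 where "x0 = Re (\<phi> z)"
  define x0' where "x0' = Re (\<phi>' z)"
  define y0' where "y0' = Im (\<phi>' z)"
  have zr': "\<phi>' z \<in> rect W'" using q'(4) z by blast
  have y0': "0 < y0'" "y0' < 1" using zr' by (auto simp: rect_def y0'_def)
  have x0'W: "0 < x0'" "x0' < W'" using zr' by (auto simp: rect_def x0'_def)
  have \<psi>'z: "\<psi>' (Complex x0' y0') = z"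
  proof -
    have "Complex x0' y0' = \<phi>' z" by (simp add: x0'_def y0'_def complex_eq_iff)
    then show ?thesis using inv1'[OF z] by simp
  qed
  have orect: "open (rect W)" "open (rect W')" unfolding rect_def
    by (intro open_Collect_conj open_Collect_less continuous_intros)+
  obtain \<zeta>' where \<zeta>': "\<zeta>' \<in> marking_arc p \<theta> m'" "((\<lambda>y. \<psi>' (Complex x0' y)) \<longlongrightarrow> \<zeta>') (at_right 0)"
    using qm_bottom_limit[OF Q' x0'W inv2'] by blast
  define L where "L = Re (\<phi> \<zeta>')"
  have L: "L = 0 \<or> L = W"
    using qm_side[OF Q M mp np m'p d2(1) d2(2)] \<zeta>'(1) by (auto simp: L_def)
  define \<rho> where "\<rho> = (\<lambda>y. Re (\<phi> (\<psi>' (Complex x0' y))))"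
  have \<rho>lim: "(\<rho> \<longlongrightarrow> L) (at_right 0)"
  proof -
    have ev: "\<forall>\<^sub>F y in at_right 0. \<psi>' (Complex x0' y) \<in> cball 0 1"
      unfolding eventually_at_right_field
    proof (intro exI[of _ 1] conjI allI impI)
      fix y :: real assume "0 < y" "y < 1"
      then have "Complex x0' y \<in> rect W'" using x0'W by (simp add: rect_def)
      then show "\<psi>' (Complex x0' y) \<in> cball 0 1" using inv2' by fastforce
    qed simp
    have "((\<lambda>y. \<phi> (\<psi>' (Complex x0' y))) \<longlongrightarrow> \<phi> \<zeta>') (at_right 0)"
      by (rule continuous_on_tendsto_compose[OF q(5) \<zeta>'(2)]) (use arc_sphere[OF \<zeta>'(1)] ev in auto)
    then show ?thesis unfolding \<rho>_def L_def by (rule tendsto_Re)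
  qed
  have \<rho>y0: "\<rho> y0' = x0" unfolding \<rho>_def using \<psi>'z by (simp add: x0_def)
  have cont\<rho>: "continuous_on {\<delta>..y0'} \<rho>" if "0 < \<delta>" for \<delta>
  proof -
    have c1: "continuous_on {\<delta>..y0'} (\<lambda>y. \<psi>' (Complex x0' y))"
    proof (rule continuous_on_compose2[OF holomorphic_on_imp_continuous_on[OF hol\<psi>']])
      show "continuous_on {\<delta>..y0'} (\<lambda>y. Complex x0' y)" by (auto simp: Complex_eq intro!: continuous_intros)
      show "(\<lambda>y. Complex x0' y) ` {\<delta>..y0'} \<subseteq> rect W'" using that y0' x0'W by (auto simp: rect_def)
    qed
    have "continuous_on {\<delta>..y0'} (\<lambda>y. \<phi> (\<psi>' (Complex x0' y)))"
    proof (rule continuous_on_compose2[OF q(5) c1])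
      show "(\<lambda>y. \<psi>' (Complex x0' y)) ` {\<delta>..y0'} \<subseteq> cball 0 1"
      proof
        fix w assume "w \<in> (\<lambda>y. \<psi>' (Complex x0' y)) ` {\<delta>..y0'}"
        then obtain y where y: "y \<in> {\<delta>..y0'}" "w = \<psi>' (Complex x0' y)" by blast
        then have "Complex x0' y \<in> rect W'" using that y0' x0'W by (auto simp: rect_def)
        then show "w \<in> cball 0 1" using inv2' y(2) by fastforce
      qed
    qed
    then show ?thesis unfolding \<rho>_def by (intro continuous_intros)
  qed
  have hitpt: "\<exists>u\<in>ball 0 1. Re (\<phi> u) = x \<and> Re (\<phi>' u) = x0'" if x: "min L x0 < x" "x < max L x0" for x
  proof -
    have "0 < \<bar>x - L\<bar>" using x by auto
    from tendstoD[OF \<rho>lim this]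
    have "\<forall>\<^sub>F y in at_right 0. dist (\<rho> y) L < \<bar>x - L\<bar>" .
    then obtain bb where bb: "bb > 0" "\<And>y. 0 < y \<Longrightarrow> y < bb \<Longrightarrow> dist (\<rho> y) L < \<bar>x - L\<bar>"
      unfolding eventually_at_right_field by blast
    define \<delta> where "\<delta> = min bb y0' / 2"
    have \<delta>: "0 < \<delta>" "\<delta> < y0'" "\<delta> < bb" using bb y0' by (auto simp: \<delta>_def)
    have d\<delta>: "\<bar>\<rho> \<delta> - L\<bar> < \<bar>x - L\<bar>" using bb(2)[OF \<delta>(1) \<delta>(3)] by (simp add: dist_real_def)
    obtain y where y: "\<delta> \<le> y" "y \<le> y0'" "\<rho> y = x"
    proof (cases "L < x0")
      case True
      then have "\<rho> \<delta> \<le> x" "x \<le> \<rho> y0'" using x d\<delta> \<rho>y0 by auto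
      then show ?thesis using IVT'[of \<rho> \<delta> x y0'] cont\<rho>[OF \<delta>(1)] \<delta> that by auto
    next
      case False
      then have "x \<le> \<rho> \<delta>" "\<rho> y0' \<le> x" using x d\<delta> \<rho>y0 by auto
      then show ?thesis using IVT2'[of \<rho> y0' x \<delta>] cont\<rho>[OF \<delta>(1)] \<delta> that by auto
    qed
    have "Complex x0' y \<in> rect W'" using y \<delta> y0' x0'W by (simp add: rect_def)
    then have u: "\<psi>' (Complex x0' y) \<in> ball 0 1" "\<phi>' (\<psi>' (Complex x0' y)) = Complex x0' y" using inv2' by auto
    show ?thesis
      using u y(3) by (intro bexI[of _ "\<psi>' (Complex x0' y)"]) (auto simp: \<rho>_def)
  qed
  define a where "a = min L x0"
  define b where "b = max L x0"
  have ab: "0 \<le> a" "b \<le> W" "1 < b - a"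
    using L zx q(1) by (auto simp: a_def b_def x0_def)
  define S where "S = {z. a < Re z \<and> Re z < b \<and> 0 < Im z \<and> Im z < 1}"
  have SR: "S \<subseteq> rect W" using ab by (auto simp: S_def rect_def)
  define g where "g = (\<lambda>w. \<phi>' (\<psi> w))"
  have holg: "g holomorphic_on S"
  proof -
    have "(\<phi>' \<circ> \<psi>) holomorphic_on S"
      by (rule holomorphic_on_compose_gen[OF holomorphic_on_subset[OF hol\<psi> SR] q'(2)]) (use inv2 SR in blast)
    then show ?thesis by (simp add: g_def o_def)
  qed
  have injg: "inj_on g S"
  proof (rule inj_onI)
    fix u v assume u: "u \<in> S" and v: "v \<in> S" and e: "g u = g v"
    have "\<psi> u \<in> ball 0 1" "\<psi> v \<in> ball 0 1" using inv2 u v SR by blast+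
    then have "\<psi> u = \<psi> v" using q'(3) e by (simp add: g_def inj_on_def)
    then have "\<phi> (\<psi> u) = \<phi> (\<psi> v)" by simp
    moreover have "\<phi> (\<psi> u) = u" "\<phi> (\<psi> v) = v" using inv2[of u] inv2[of v] u v SR by auto
    ultimately show "u = v" by simp
  qed
  have imgg: "g ` S \<subseteq> rect W'"
  proof
    fix w assume "w \<in> g ` S"
    then obtain u where u: "u \<in> S" "w = g u" by blast
    then have "\<psi> u \<in> ball 0 1" using inv2 SR by blast
    then show "w \<in> rect W'" using q'(4) u(2) by (auto simp: g_def)
  qed
  have side': "(\<forall>\<zeta>\<in>marking_arc p \<theta> m. Re (\<phi>' \<zeta>) = 0) \<or> (\<forall>\<zeta>\<in>marking_arc p \<theta> m. Re (\<phi>' \<zeta>) = W')"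
    using qm_side[OF Q' M m'p n'p mp d1(1) d1(2)] .
  define L' where "L' = (if (\<forall>\<zeta>\<in>marking_arc p \<theta> m. Re (\<phi>' \<zeta>) = 0) then 0 else W')"
  have L': "L' = 0 \<or> L' = W'" by (simp add: L'_def)
  have limg: "((\<lambda>y. Re (g (Complex x y))) \<longlongrightarrow> L') (at_right 0)" if x: "a < x" "x < b" for x
  proof -
    have x0W: "0 < x" "x < W" using x ab by auto
    obtain \<zeta> where \<zeta>: "\<zeta> \<in> marking_arc p \<theta> m" "((\<lambda>y. \<psi> (Complex x y)) \<longlongrightarrow> \<zeta>) (at_right 0)"
      using qm_bottom_limit[OF Q x0W inv2] by blast
    have ev: "\<forall>\<^sub>F y in at_right 0. \<psi> (Complex x y) \<in> cball 0 1"
      unfolding eventually_at_right_field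
    proof (intro exI[of _ 1] conjI allI impI)
      fix y :: real assume "0 < y" "y < 1"
      then have "Complex x y \<in> rect W" using x0W by (simp add: rect_def)
      then show "\<psi> (Complex x y) \<in> cball 0 1" using inv2 by fastforce
    qed simp
    have "((\<lambda>y. \<phi>' (\<psi> (Complex x y))) \<longlongrightarrow> \<phi>' \<zeta>) (at_right 0)"
      by (rule continuous_on_tendsto_compose[OF q'(5) \<zeta>(2)]) (use arc_sphere[OF \<zeta>(1)] ev in auto)
    then have "((\<lambda>y. Re (\<phi>' (\<psi> (Complex x y)))) \<longlongrightarrow> Re (\<phi>' \<zeta>)) (at_right 0)" by (rule tendsto_Re)
    moreover have "Re (\<phi>' \<zeta>) = L'" using side' \<zeta>(1) by (auto simp: L'_def)
    ultimately show ?thesis by (simp add: g_def)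
  qed
  have hitg: "\<exists>y1. 0 < y1 \<and> y1 < 1 \<and> Re (g (Complex x y1)) = x0'" if x: "a < x" "x < b" for x
  proof -
    obtain u where u: "u \<in> ball 0 1" "Re (\<phi> u) = x" "Re (\<phi>' u) = x0'"
      using hitpt[of x] x by (auto simp: a_def b_def)
    have ur: "\<phi> u \<in> rect W" using q(4) u(1) by blast
    define y1 where "y1 = Im (\<phi> u)"
    have "Complex x y1 = \<phi> u" using u(2) by (simp add: y1_def complex_eq_iff)
    then have "\<psi> (Complex x y1) = u" using inv1[OF u(1)] by simp
    then show ?thesis using ur u(3) by (intro exI[of _ y1]) (auto simp: g_def y1_def rect_def)
  qed
  show False
    by (rule key_apply[OF holg[unfolded S_def] injg[unfolded S_def] imgg[unfolded S_def] limg L' hitg])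
       (use ab zx' in \<open>auto simp: x0'_def\<close>)
qed


lemma qm_neq:
  assumes Q: "quad_map p \<theta> m n \<phi> W" shows "m \<noteq> n"
proof
  assume "m = n"
  then have "{z. 0 \<le> Re z \<and> Re z \<le> W \<and> Im z = 0} = {z. 0 \<le> Re z \<and> Re z \<le> W \<and> Im z = 1}"
    using qmD(6,7)[OF Q] by simp
  moreover have "(0::complex) \<in> {z. 0 \<le> Re z \<and> Re z \<le> W \<and> Im z = 0}" using qmD(1)[OF Q] by simp
  ultimately show False by auto
qed

lemma normal_qm:
  assumes Q: "quad_map p \<theta> m n \<phi> W" and e: "e = m \<or> e = n"
    and zx: "1 < Re (\<phi> z)" "Re (\<phi> z) < W - 1"
  shows "\<exists>kk \<Phi>. quad_map p \<theta> e kk \<Phi> W \<and> (kk = m \<or> kk = n) \<and> {e, kk} = {m, n}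
      \<and> 1 < Re (\<Phi> z) \<and> Re (\<Phi> z) < W - 1"
  using e
proof
  assume "e = m" then show ?thesis using Q zx by blast
next
  assume en: "e = n"
  have "quad_map p \<theta> n m (\<lambda>z. of_real W + \<i> - \<phi> z) W" by (rule qm_rot[OF Q])
  moreover have "1 < Re (of_real W + \<i> - \<phi> z)" "Re (of_real W + \<i> - \<phi> z) < W - 1" using zx by auto
  ultimately show ?thesis using en by (intro exI[of _ m] exI[of _ "\<lambda>z. of_real W + \<i> - \<phi> z"]) auto
qed

theorem lemma3p3:
  fixes p :: nat and \<theta> :: "nat \<Rightarrow> real" and m n m' n' :: nat
    and \<phi> \<phi>' :: "complex \<Rightarrow> complex" and W W' :: real
  assumes "ideal_marking p \<theta>"
    and "m < p" "n < p" "m' < p" "n' < p"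
    and "\<not> adjacent_idx p m n" "\<not> adjacent_idx p m' n'"
    and "{m, n} \<noteq> {m', n'}"
    and "quad_map p \<theta> m n \<phi> W" "quad_map p \<theta> m' n' \<phi>' W'"
    and "W > 2" "W' > 2"
  shows "truncated_quad \<phi> W \<inter> truncated_quad \<phi>' W' = {}
    \<and> (\<forall>x x'. 1 < x \<and> x < W - 1 \<and> 1 < x' \<and> x' < W' - 1 \<longrightarrow>
          vertical_leaf \<phi> x \<inter> vertical_leaf \<phi>' x' = {})"
proof -
  note M = assms(1) and Q = assms(9) and Q' = assms(10)
  have mn: "m \<noteq> n" using qm_neq[OF Q] .
  have mn': "m' \<noteq> n'" using qm_neq[OF Q'] .
  obtain e where e: "e = m \<or> e = n" "e \<noteq> m'" "e \<noteq> n'"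
    using assms(8) mn mn' by blast
  obtain e' where e': "e' = m' \<or> e' = n'" "e' \<noteq> m" "e' \<noteq> n"
    using assms(8) mn mn' by blast
  have disj: "truncated_quad \<phi> W \<inter> truncated_quad \<phi>' W' = {}"
  proof (rule ccontr)
    assume "truncated_quad \<phi> W \<inter> truncated_quad \<phi>' W' \<noteq> {}"
    then obtain z where z: "z \<in> ball 0 1" "1 < Re (\<phi> z)" "Re (\<phi> z) < W - 1"
      "1 < Re (\<phi>' z)" "Re (\<phi>' z) < W' - 1"
      by (auto simp: truncated_quad_def)
    obtain kk \<Phi> where kk: "quad_map p \<theta> e kk \<Phi> W" "kk = m \<or> kk = n" "{e, kk} = {m, n}"
      "1 < Re (\<Phi> z)" "Re (\<Phi> z) < W - 1"
      using normal_qm[OF Q e(1) z(2,3)] by blast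
    obtain kk' \<Phi>' where kk': "quad_map p \<theta> e' kk' \<Phi>' W'" "kk' = m' \<or> kk' = n'" "{e', kk'} = {m', n'}"
      "1 < Re (\<Phi>' z)" "Re (\<Phi>' z) < W' - 1"
      using normal_qm[OF Q' e'(1) z(4,5)] by blast
    have ep: "e < p" "kk < p" "e' < p" "kk' < p" using e(1) kk(2) e'(1) kk'(2) assms(2-5) by auto
    have "e \<noteq> e'" "e \<noteq> kk'" using e kk'(3) by auto
    moreover have "e' \<noteq> e" "e' \<noteq> kk" using e' kk(3) by auto
    ultimately show False
      using core[OF kk(1) kk'(1) M ep _ _ _ _ z(1) kk(4,5) kk'(4,5)] by blast
  qed
  moreover have "vertical_leaf \<phi> x \<inter> vertical_leaf \<phi>' x' = {}"
    if "1 < x \<and> x < W - 1 \<and> 1 < x' \<and> x' < W' - 1" for x x'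
  proof -
    have "vertical_leaf \<phi> x \<subseteq> truncated_quad \<phi> W" "vertical_leaf \<phi>' x' \<subseteq> truncated_quad \<phi>' W'"
      using that by (auto simp: vertical_leaf_def truncated_quad_def)
    then show ?thesis using disj by blast
  qed
  ultimately show ?thesis by blast
qed


end
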